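(* Let $(H,\leq,\ast)$ be a discrete $\omega$-dimensional poc-set and let $A$ be a maximal transverse subset of $H$. Then $$\pi_A=\{h\in H:\exists a\in A,\ a\leq h\}\cup\{h\in H:\exists a\in A,\ a^\ast<h\}$$ is a principal ultrafilter on $H$. Moreover, every principal ultrafilter on $H$ is of this form.
   Context: A poc-set $(H,\leq,\ast)$ is a poset with minimum $0$ and an order-reversing involution $h\mapsto h^\ast$ such that $h\leq h^\ast$ implies $h=0$; $0,0^\ast$ are trivial, others proper. Discrete: for proper $a,b$ the interval $\{h:a\le h\le b\}$ is finite. $h,k$ are nested if one of $h\le k$, $h^\ast\le k$, $h\le k^\ast$, $h^\ast\le k^\ast$ holds, transverse otherwise; a set is transverse if its elements are pairwise transverse. $\omega$-dimensional: no infinite transverse subset. An ultrafilter is $\alpha\subseteq H$ such that for each $h$ exactly one of $h,h^\ast$ lies in $\alpha$, and no $h,k\in\alpha$ satisfy $h\le k^\ast$. An ultrafilter is principal if every descending chain $h_1\ge h_2\ge\cdots$ of its elements is eventually constant. *)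

theory Defs
  imports Main
begin

definition pocset :: "'a set \<Rightarrow> ('a \<Rightarrow> 'a \<Rightarrow> bool) \<Rightarrow> ('a \<Rightarrow> 'a) \<Rightarrow> 'a \<Rightarrow> bool" where
  "pocset H le star zero \<longleftrightarrow>
     (\<forall>h\<in>H. le h h) \<and>
     (\<forall>h\<in>H. \<forall>k\<in>H. le h k \<and> le k h \<longrightarrow> h = k) \<and>
     (\<forall>h\<in>H. \<forall>k\<in>H. \<forall>l\<in>H. le h k \<and> le k l \<longrightarrow> le h l) \<and>
     zero \<in> H \<and> (\<forall>h\<in>H. le zero h) \<and>
     (\<forall>h\<in>H. star h \<in> H) \<and>
     (\<forall>h\<in>H. star (star h) = h) \<and>
     (\<forall>h\<in>H. \<forall>k\<in>H. le h k \<longrightarrow> le (star k) (star h)) \<and>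
     (\<forall>h\<in>H. le h (star h) \<longrightarrow> h = zero)"

definition proper :: "'a set \<Rightarrow> ('a \<Rightarrow> 'a) \<Rightarrow> 'a \<Rightarrow> 'a \<Rightarrow> bool" where
  "proper H star zero h \<longleftrightarrow> h \<in> H \<and> h \<noteq> zero \<and> h \<noteq> star zero"

definition discrete_pocset :: "'a set \<Rightarrow> ('a \<Rightarrow> 'a \<Rightarrow> bool) \<Rightarrow> ('a \<Rightarrow> 'a) \<Rightarrow> 'a \<Rightarrow> bool" where
  "discrete_pocset H le star zero \<longleftrightarrow>
     (\<forall>a b. proper H star zero a \<and> proper H star zero b \<longrightarrow>
        finite {h \<in> H. le a h \<and> le h b})"

definition nested :: "('a \<Rightarrow> 'a \<Rightarrow> bool) \<Rightarrow> ('a \<Rightarrow> 'a) \<Rightarrow> 'a \<Rightarrow> 'a \<Rightarrow> bool" where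
  "nested le star h k \<longleftrightarrow> le h k \<or> le (star h) k \<or> le h (star k) \<or> le (star h) (star k)"

definition transverse_set :: "('a \<Rightarrow> 'a \<Rightarrow> bool) \<Rightarrow> ('a \<Rightarrow> 'a) \<Rightarrow> 'a set \<Rightarrow> bool" where
  "transverse_set le star A \<longleftrightarrow> (\<forall>h\<in>A. \<forall>k\<in>A. h \<noteq> k \<longrightarrow> \<not> nested le star h k)"

definition omega_dimensional :: "'a set \<Rightarrow> ('a \<Rightarrow> 'a \<Rightarrow> bool) \<Rightarrow> ('a \<Rightarrow> 'a) \<Rightarrow> bool" where
  "omega_dimensional H le star \<longleftrightarrow>
     (\<forall>A. A \<subseteq> H \<and> transverse_set le star A \<longrightarrow> finite A)"

definition maximal_transverse :: "'a set \<Rightarrow> ('a \<Rightarrow> 'a \<Rightarrow> bool) \<Rightarrow> ('a \<Rightarrow> 'a) \<Rightarrow> 'a \<Rightarrow> 'a set \<Rightarrow> bool" where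
  "maximal_transverse H le star zero A \<longleftrightarrow>
     (\<forall>a\<in>A. proper H star zero a) \<and> transverse_set le star A \<and>
     (\<forall>B. (\<forall>b\<in>B. proper H star zero b) \<and> transverse_set le star B \<and> A \<subseteq> B \<longrightarrow> B = A)"

definition ultrafilter :: "'a set \<Rightarrow> ('a \<Rightarrow> 'a \<Rightarrow> bool) \<Rightarrow> ('a \<Rightarrow> 'a) \<Rightarrow> 'a set \<Rightarrow> bool" where
  "ultrafilter H le star \<alpha> \<longleftrightarrow>
     \<alpha> \<subseteq> H \<and>
     (\<forall>h\<in>H. (h \<in> \<alpha>) \<noteq> (star h \<in> \<alpha>)) \<and>
     (\<forall>h\<in>\<alpha>. \<forall>k\<in>\<alpha>. \<not> le h (star k))"

definition principal_ultrafilter :: "'a set \<Rightarrow> ('a \<Rightarrow> 'a \<Rightarrow> bool) \<Rightarrow> ('a \<Rightarrow> 'a) \<Rightarrow> 'a set \<Rightarrow> bool" where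
  "principal_ultrafilter H le star \<alpha> \<longleftrightarrow>
     ultrafilter H le star \<alpha> \<and>
     (\<forall>f :: nat \<Rightarrow> 'a. (\<forall>n. f n \<in> \<alpha>) \<and> (\<forall>n. le (f (Suc n)) (f n)) \<longrightarrow>
        (\<exists>N. \<forall>n\<ge>N. f n = f N))"

definition pi_set :: "'a set \<Rightarrow> ('a \<Rightarrow> 'a \<Rightarrow> bool) \<Rightarrow> ('a \<Rightarrow> 'a) \<Rightarrow> 'a set \<Rightarrow> 'a set" where
  "pi_set H le star A =
     {h \<in> H. \<exists>a\<in>A. le a h} \<union> {h \<in> H. \<exists>a\<in>A. le (star a) h \<and> star a \<noteq> h}"

end

theory Submission
  imports Defs
begin

lemma inf_unb: "infinite (S :: nat set) \<Longrightarrow> \<exists>n\<ge>m. n \<in> S"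
proof (rule ccontr)
  assume "infinite S" "\<not> (\<exists>n\<ge>m. n \<in> S)"
  then have "S \<subseteq> {..<m}" by (auto simp: not_le)
  then show False using \<open>infinite S\<close> finite_subset by blast
qed

locale poc =
  fixes H :: "'a set" and le :: "'a \<Rightarrow> 'a \<Rightarrow> bool" and star :: "'a \<Rightarrow> 'a" and zero :: 'a
  assumes P: "pocset H le star zero"
begin

lemma refl: "h \<in> H \<Longrightarrow> le h h" using P unfolding pocset_def by blast
lemma antisym: "h \<in> H \<Longrightarrow> k \<in> H \<Longrightarrow> le h k \<Longrightarrow> le k h \<Longrightarrow> h = k"
  using P unfolding pocset_def by blast
lemma trans: "h \<in> H \<Longrightarrow> k \<in> H \<Longrightarrow> l \<in> H \<Longrightarrow> le h k \<Longrightarrow> le k l \<Longrightarrow> le h l"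
  using P unfolding pocset_def by blast
lemma zero_in: "zero \<in> H" using P unfolding pocset_def by blast
lemma zero_le: "h \<in> H \<Longrightarrow> le zero h" using P unfolding pocset_def by blast
lemma star_in: "h \<in> H \<Longrightarrow> star h \<in> H" using P unfolding pocset_def by blast
lemma star_star[simp]: "h \<in> H \<Longrightarrow> star (star h) = h" using P unfolding pocset_def by blast
lemma star_anti: "h \<in> H \<Longrightarrow> k \<in> H \<Longrightarrow> le h k \<Longrightarrow> le (star k) (star h)"
  using P unfolding pocset_def by blast
lemma le_star_zero: "h \<in> H \<Longrightarrow> le h (star h) \<Longrightarrow> h = zero"
  using P unfolding pocset_def by blast

lemma le_top: "h \<in> H \<Longrightarrow> le h (star zero)"
  using star_anti[OF zero_in star_in zero_le[OF star_in]] by simp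

lemma star_le_swap: "h \<in> H \<Longrightarrow> k \<in> H \<Longrightarrow> le (star h) k \<Longrightarrow> le (star k) h"
  using star_anti[of "star h" k] star_in by simp

lemma le_star_swap: "h \<in> H \<Longrightarrow> k \<in> H \<Longrightarrow> le h (star k) \<Longrightarrow> le k (star h)"
  using star_anti[of h "star k"] star_in by simp

lemma star_inj: "h \<in> H \<Longrightarrow> k \<in> H \<Longrightarrow> star h = star k \<Longrightarrow> h = k"
  by (metis star_star)

lemma proper_star: "proper H star zero h \<Longrightarrow> proper H star zero (star h)"
  unfolding proper_def using star_in zero_in star_star star_inj by metis

lemma nested_sym: "h \<in> H \<Longrightarrow> k \<in> H \<Longrightarrow> nested le star h k \<Longrightarrow> nested le star k h"
  unfolding nested_def using star_anti star_le_swap le_star_swap star_in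
  by (metis star_star)

lemma pi_mem: "h \<in> pi_set H le star A \<longleftrightarrow>
   h \<in> H \<and> ((\<exists>a\<in>A. le a h) \<or> (\<exists>a\<in>A. le (star a) h \<and> star a \<noteq> h))"
  by (auto simp: pi_set_def)

lemma transverse_ins:
  assumes "transverse_set le star A" "A \<subseteq> H" "h \<in> H" "\<not> transverse_set le star (insert h A)"
  shows "\<exists>a\<in>A. a \<noteq> h \<and> nested le star a h"
proof -
  from assms(4) obtain x y where xy: "x \<in> insert h A" "y \<in> insert h A" "x \<noteq> y" "nested le star x y"
    unfolding transverse_set_def by blast
  show ?thesis
  proof (cases "x = h")
    case True
    then have "y \<in> A" "y \<noteq> h" using xy by auto
    moreover have "nested le star y h" using nested_sym[of h y] xy True \<open>y \<in> A\<close> assms(2,3) by blast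
    ultimately show ?thesis by blast
  next
    case False
    then show ?thesis using xy assms(1,2,3) by (auto simp: transverse_set_def)
  qed
qed

lemma pi_consistent:
  assumes A: "\<forall>a\<in>A. proper H star zero a" "transverse_set le star A"
    and h: "h \<in> pi_set H le star A" and k: "k \<in> pi_set H le star A" and hk: "le h (star k)"
  shows False
proof -
  have AH: "\<And>a. a \<in> A \<Longrightarrow> a \<in> H" "\<And>a. a \<in> A \<Longrightarrow> a \<noteq> zero" "\<And>a. a \<in> A \<Longrightarrow> a \<noteq> star zero"
    using A(1) by (auto simp: proper_def)
  have tr: "\<And>a b. a \<in> A \<Longrightarrow> b \<in> A \<Longrightarrow> a \<noteq> b \<Longrightarrow> \<not> nested le star a b"
    using A(2) by (auto simp: transverse_set_def)
  have hH: "h \<in> H" and kH: "k \<in> H" using h k by (auto simp: pi_mem)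
  from h obtain a where a: "a \<in> A" "le a h \<or> (le (star a) h \<and> star a \<noteq> h)" by (auto simp: pi_mem)
  from k obtain b where b: "b \<in> A" "le b k \<or> (le (star b) k \<and> star b \<noteq> k)" by (auto simp: pi_mem)
  have aH: "a \<in> H" "star a \<in> H" and bH: "b \<in> H" "star b \<in> H" using a b AH star_in by auto
  have skH: "star k \<in> H" using kH star_in by auto
  consider "le a h" "le b k" | "le a h" "le (star b) k" "star b \<noteq> k"
    | "le (star a) h" "star a \<noteq> h" "le b k" | "le (star a) h" "star a \<noteq> h" "le (star b) k" "star b \<noteq> k"
    using a b by blast
  then show False
  proof cases
    case 1
    have "le (star k) (star b)" using star_anti[OF bH(1) kH 1(2)] .
    then have "le a (star b)" using trans[OF aH(1) hH skH 1(1) hk] trans skH aH bH by blast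
    then show False
      using tr[OF a(1) b(1)] le_star_zero[OF aH(1)] AH a by (cases "a = b") (auto simp: nested_def)
  next
    case 2
    have sk: "le (star k) b" using star_le_swap[OF bH(1) kH 2(2)] .
    have ab: "le a b" using trans[OF aH(1) hH skH 2(1) hk] trans[OF aH(1) skH bH(1) _ sk] by blast
    show False
    proof (cases "a = b")
      case True
      have "le a (star k)" using trans[OF aH(1) hH skH 2(1) hk] .
      then have "star k = a" using antisym[OF skH aH(1)] sk True by simp
      then have "k = star b" using kH True by (metis star_star)
      then show False using 2 by simp
    next
      case False then show False using tr[OF a(1) b(1)] ab by (auto simp: nested_def)
    qed
  next
    case 3
    have "le (star k) (star b)" using star_anti[OF bH(1) kH 3(3)] .
    then have ab: "le (star a) (star b)" using trans[OF aH(2) hH skH 3(1) hk] trans skH aH bH by blast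
    show False
    proof (cases "a = b")
      case True
      have "le h (star a)" using trans[OF hH skH bH(2) hk] \<open>le (star k) (star b)\<close> True by simp
      then have "h = star a" using antisym[OF hH aH(2)] 3 by simp
      then show False using 3 by simp
    next
      case False then show False using tr[OF a(1) b(1)] ab by (auto simp: nested_def)
    qed
  next
    case 4
    have sk: "le (star k) b" using star_le_swap[OF bH(1) kH 4(3)] .
    have ab: "le (star a) b" using trans[OF aH(2) hH skH 4(1) hk] trans[OF aH(2) skH bH(1) _ sk] by blast
    show False
    proof (cases "a = b")
      case True
      have "le (star a) (star (star a))" using ab True aH by simp
      then have "star a = zero" using le_star_zero[OF aH(2)] by simp
      then have "a = star zero" using aH by (metis star_star)
      then show False using AH a by simp
    next
      case False then show False using tr[OF a(1) b(1)] ab by (auto simp: nested_def)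
    qed
  qed
qed


lemma antitone_chain:
  assumes fH: "\<And>n. f n \<in> H" and st: "\<And>n. le (f (Suc n)) (f n)" and mn: "m \<le> n"
  shows "le (f n) (f m)"
  using mn
proof (induction n rule: dec_induct)
  case base then show ?case using refl fH by blast
next
  case (step n) then show ?case using trans[OF fH fH fH st] by blast
qed

lemma part1:
  assumes D: "discrete_pocset H le star zero" and O: "omega_dimensional H le star"
    and ex: "\<exists>h. proper H star zero h" and MA: "maximal_transverse H le star zero A"
  shows "principal_ultrafilter H le star (pi_set H le star A)"
proof -
  have Apr: "\<forall>a\<in>A. proper H star zero a" and Atr: "transverse_set le star A"
    and Amax: "\<And>B. (\<forall>b\<in>B. proper H star zero b) \<Longrightarrow> transverse_set le star B \<Longrightarrow> A \<subseteq> B \<Longrightarrow> B = A"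
    using MA unfolding maximal_transverse_def by blast+
  have AH: "A \<subseteq> H" using Apr by (auto simp: proper_def)
  have Afin: "finite A" using O AH Atr unfolding omega_dimensional_def by blast
  obtain h0 where h0: "proper H star zero h0" using ex by blast
  have "A \<noteq> {}"
  proof
    assume "A = {}"
    then have "{h0} = A" using Amax[of "{h0}"] h0 by (auto simp: transverse_set_def)
    with \<open>A = {}\<close> show False by simp
  qed
  then obtain a0 where a0: "a0 \<in> A" by blast
  let ?P = "pi_set H le star A"
  have one: "h \<in> ?P \<or> star h \<in> ?P" if hH: "h \<in> H" for h
  proof (cases "h = zero \<or> h = star zero")
    case True
    then show ?thesis using le_top[of a0] a0 AH hH zero_in star_in
      by (auto simp: pi_mem)
  next
    case False
    then have hp: "proper H star zero h" using hH by (auto simp: proper_def)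
    show ?thesis
    proof (cases "h \<in> A")
      case True then show ?thesis using refl hH by (auto simp: pi_mem)
    next
      case hA: False
      have "\<not> transverse_set le star (insert h A)"
        using Amax[of "insert h A"] hp Apr hA by auto
      then obtain a where a: "a \<in> A" "a \<noteq> h" "nested le star a h"
        using transverse_ins[OF Atr AH hH] by blast
      have aH: "a \<in> H" using a AH by auto
      have shH: "star h \<in> H" using star_in hH by auto
      from a(3) consider "le a h" | "le (star a) h" | "le a (star h)" | "le (star a) (star h)"
        unfolding nested_def by blast
      then show ?thesis
      proof cases
        case 1 then show ?thesis using a hH by (auto simp: pi_mem)
      next
        case 2 then show ?thesis
        proof (cases "star a = h")
          case True
          then have "star h = a" using aH by auto
          then show ?thesis using a refl aH shH by (auto simp: pi_mem)
        next
          case False then show ?thesis using a hH 2 by (auto simp: pi_mem)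
        qed
      next
        case 3 then show ?thesis using a shH by (auto simp: pi_mem)
      next
        case 4 then show ?thesis
        proof (cases "star a = star h")
          case True
          then have "a = h" using star_inj aH hH by blast
          then show ?thesis using a by simp
        next
          case False then show ?thesis using a shH 4 by (auto simp: pi_mem)
        qed
      qed
    qed
  qed
  have uf: "ultrafilter H le star ?P"
    unfolding ultrafilter_def
  proof (intro conjI ballI)
    show "?P \<subseteq> H" by (auto simp: pi_mem)
  next
    fix h k assume "h \<in> ?P" "k \<in> ?P"
    then show "\<not> le h (star k)" using pi_consistent[OF Apr Atr] by blast
  next
    fix h assume hH: "h \<in> H"
    have "\<not> (h \<in> ?P \<and> star h \<in> ?P)"
      using pi_consistent[OF Apr Atr, of h "star h"] refl hH by auto
    then show "(h \<in> ?P) \<noteq> (star h \<in> ?P)" using one[OF hH] by blast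
  qed
  have pr: "\<exists>N. \<forall>n\<ge>N. f n = f N"
    if fP: "\<forall>n. f n \<in> ?P" and st: "\<forall>n. le (f (Suc n)) (f n)" for f :: "nat \<Rightarrow> 'a"
  proof -
    have fH: "f n \<in> H" for n
    proof -
      have "f n \<in> pi_set H le star A" using fP by blast
      then show "f n \<in> H" unfolding pi_mem by blast
    qed
    have st': "\<And>n. le (f (Suc n)) (f n)" using st by blast
    have anti: "le (f n) (f m)" if "m \<le> n" for m n using antitone_chain[of f, OF fH st' that] .
    let ?S = "A \<union> star ` A"
    have Sfin: "finite ?S" using Afin by simp
    have "\<forall>n. \<exists>c. c \<in> ?S \<and> le c (f n)"
    proof
      fix n
      from fP obtain a where "a \<in> A" "le a (f n) \<or> le (star a) (f n)" by (auto simp: pi_mem)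
      then show "\<exists>c. c \<in> ?S \<and> le c (f n)" by blast
    qed
    then have "\<exists>c. \<forall>n. c n \<in> ?S \<and> le (c n) (f n)" by (rule choice)
    then obtain c where c: "\<And>n. c n \<in> ?S" "\<And>n. le (c n) (f n)" by blast
    have "finite (c ` UNIV)" proof (rule finite_subset[OF _ Sfin])
      show "c ` UNIV \<subseteq> ?S" using c(1) by blast
    qed
    then obtain n0 where n0: "infinite {n \<in> UNIV. c n = c n0}"
      using pigeonhole_infinite[of "UNIV :: nat set" c] by auto
    define c0 where "c0 = c n0"
    have c0S: "c0 \<in> ?S" using c c0_def by auto
    have c0pr: "proper H star zero c0" using c0S Apr proper_star by auto
    have c0H: "c0 \<in> H" using c0pr by (auto simp: proper_def)
    have c0le: "le c0 (f n)" for n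
    proof -
      obtain M where M: "M \<ge> n" "c M = c0"
        using n0 using inf_unb[of _ n] unfolding c0_def by auto
      show ?thesis using trans[OF c0H fH fH _ anti[OF M(1)]] c(2)[of M] M(2) by simp
    qed
    show ?thesis
    proof (cases "\<forall>n. f n = star zero")
      case True then show ?thesis by auto
    next
      case False
      then obtain m where m: "f m \<noteq> star zero" by blast
      have "f m \<noteq> zero"
      proof
        assume "f m = zero"
        then have "c0 = zero" using antisym[OF c0H zero_in] c0le[of m] zero_le[OF c0H] by simp
        then show False using c0pr by (simp add: proper_def)
      qed
      then have fmp: "proper H star zero (f m)" using m fH by (simp add: proper_def)
      let ?I = "{h \<in> H. le c0 h \<and> le h (f m)}"
      have Ifin: "finite ?I" using D c0pr fmp unfolding discrete_pocset_def by blast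
      have "f ` {m..} \<subseteq> ?I" using fH c0le anti by auto
      then have "finite (f ` {m..})" using Ifin finite_subset by blast
      then obtain N where N: "N \<in> {m..}" "infinite {n \<in> {m..}. f n = f N}"
        using pigeonhole_infinite[of "{m..}" f] infinite_Ici[of m] by auto
      have "f n = f N" if nN: "n \<ge> N" for n
      proof -
        obtain M where M: "M \<ge> n" "M \<in> {n \<in> {m..}. f n = f N}"
          using inf_unb[OF N(2), of n] by blast
        have "le (f M) (f n)" using anti M(1) .
        moreover have "le (f n) (f N)" using anti nN .
        ultimately show ?thesis using antisym[OF fH fH] M(2) by auto
      qed
      then show ?thesis by blast
    qed
  qed
  show ?thesis unfolding principal_ultrafilter_def using uf pr by blast
qed

lemma part2:
  assumes ex: "\<exists>h. proper H star zero h" and PU: "principal_ultrafilter H le star \<alpha>"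
  shows "\<exists>A. maximal_transverse H le star zero A \<and> \<alpha> = pi_set H le star A"
proof -
  have aH: "\<alpha> \<subseteq> H" and comp: "\<And>h. h \<in> H \<Longrightarrow> (h \<in> \<alpha>) \<noteq> (star h \<in> \<alpha>)"
    and cons: "\<And>h k. h \<in> \<alpha> \<Longrightarrow> k \<in> \<alpha> \<Longrightarrow> \<not> le h (star k)"
    and chn: "\<And>f. (\<forall>n. f n \<in> \<alpha>) \<and> (\<forall>n. le (f (Suc n)) (f n)) \<Longrightarrow> \<exists>N. \<forall>n\<ge>N. f n = f N"
    using PU unfolding principal_ultrafilter_def ultrafilter_def by blast+
  have z: "zero \<notin> \<alpha>"
  proof
    assume "zero \<in> \<alpha>"
    then show False using cons[of zero zero] zero_le[OF star_in[OF zero_in]] by simp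
  qed
  have up: "k \<in> \<alpha>" if "h \<in> \<alpha>" "k \<in> H" "le h k" for h k
  proof (rule ccontr)
    assume "k \<notin> \<alpha>"
    then have sk: "star k \<in> \<alpha>" using comp[OF that(2)] by blast
    show False using cons[OF that(1) sk] that(2,3) by simp
  qed
  have nb: "star h \<notin> \<alpha>" if "h \<in> \<alpha>" for h using comp[of h] that aH by blast
  define M where "M = {a \<in> \<alpha>. \<forall>h\<in>\<alpha>. le h a \<longrightarrow> h = a}"
  have below: "\<exists>m\<in>M. le m x" if x0: "x \<in> \<alpha>" for x
  proof (rule ccontr)
    assume nm: "\<not> (\<exists>m\<in>M. le m x)"
    have xH: "x \<in> H" using x0 aH by auto
    have step: "\<exists>z. z \<in> \<alpha> \<and> le z y \<and> z \<noteq> y" if "y \<in> \<alpha>" "le y x" for y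
      using nm that unfolding M_def by blast
    define f where "f = rec_nat x (\<lambda>_ y. SOME z. z \<in> \<alpha> \<and> le z y \<and> z \<noteq> y)"
    have f0: "f 0 = x" and fS: "\<And>n. f (Suc n) = (SOME z. z \<in> \<alpha> \<and> le z (f n) \<and> z \<noteq> f n)"
      by (simp_all add: f_def)
    have inv: "f n \<in> \<alpha> \<and> le (f n) x" for n
    proof (induction n)
      case 0 then show ?case using f0 x0 refl xH by simp
    next
      case (Suc n)
      have "\<exists>z. z \<in> \<alpha> \<and> le z (f n) \<and> z \<noteq> f n" using step Suc by blast
      then have "f (Suc n) \<in> \<alpha> \<and> le (f (Suc n)) (f n) \<and> f (Suc n) \<noteq> f n"
        unfolding fS by (rule someI_ex)
      then show ?case using trans[of "f (Suc n)" "f n" x] Suc aH xH by blast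
    qed
    have props: "f (Suc n) \<in> \<alpha> \<and> le (f (Suc n)) (f n) \<and> f (Suc n) \<noteq> f n" for n
    proof -
      have "\<exists>z. z \<in> \<alpha> \<and> le z (f n) \<and> z \<noteq> f n" using step inv by blast
      then show ?thesis unfolding fS by (rule someI_ex)
    qed
    obtain N where N: "\<forall>n\<ge>N. f n = f N" using chn[of f] props inv by blast
    have "f (Suc N) = f N" using N[rule_format, of "Suc N"] by simp
    then show False using props by blast
  qed
  obtain h0 where h0: "proper H star zero h0" using ex by blast
  obtain p where p: "proper H star zero p" "p \<in> \<alpha>"
    using comp[of h0] h0 proper_star[OF h0] by (auto simp: proper_def)
  have Mpr: "proper H star zero m" if "m \<in> M" for m
  proof -
    have ma: "m \<in> \<alpha>" using that M_def by auto
    have "m \<noteq> star zero"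
    proof
      assume "m = star zero"
      then have "p = m" using that le_top[of p] p unfolding M_def by (auto simp: proper_def)
      then show False using p \<open>m = star zero\<close> by (simp add: proper_def)
    qed
    then show ?thesis using ma z aH by (auto simp: proper_def)
  qed
  have key: "le (star a) m \<and> star a \<noteq> m"
    if am: "a \<in> M" "m \<in> M" "a \<noteq> m" "nested le star a m" for a m
  proof -
    have aa: "a \<in> \<alpha>" "m \<in> \<alpha>" using am M_def by auto
    have hh: "a \<in> H" "m \<in> H" using aa aH by auto
    from am(4) consider "le a m" | "le (star a) m" | "le a (star m)" | "le (star a) (star m)"
      unfolding nested_def by blast
    then show ?thesis
    proof cases
      case 1 then show ?thesis using am aa unfolding M_def by blast
    next
      case 2 then show ?thesis using nb[OF aa(1)] aa by auto
    next
      case 3 then show ?thesis using cons aa by blast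
    next
      case 4
      then have "le m a" using star_anti[OF star_in star_in 4] hh by simp
      then have "m = a" using am(1) aa(2) unfolding M_def by blast
      then show ?thesis using am(3) by simp
    qed
  qed
  let ?F = "{B. B \<subseteq> M \<and> transverse_set le star B}"
  have zl: "\<exists>A\<in>?F. \<forall>X\<in>?F. A \<subseteq> X \<longrightarrow> X = A"
  proof (rule Zorn_Lemma, intro ballI)
    fix C assume C: "C \<in> chains ?F"
    then have CF: "C \<subseteq> ?F" unfolding chains_def by blast
    from C have ch: "chain\<^sub>\<subseteq> C" unfolding chains_def by blast
    have CM: "\<Union>C \<subseteq> M" using CF by blast
    have "transverse_set le star (\<Union>C)"
      unfolding transverse_set_def
    proof (intro ballI impI)
      fix h k assume hk: "h \<in> \<Union>C" "k \<in> \<Union>C" "h \<noteq> k"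
      then obtain X Y where XY: "X \<in> C" "Y \<in> C" "h \<in> X" "k \<in> Y" by blast
      have "X \<subseteq> Y \<or> Y \<subseteq> X" using ch XY(1,2) unfolding chain_subset_def by blast
      then obtain Z where Z: "Z \<in> C" "h \<in> Z" "k \<in> Z" using XY by blast
      have "transverse_set le star Z" using CF Z(1) by blast
      then show "\<not> nested le star h k" using Z hk(3) unfolding transverse_set_def by blast
    qed
    then show "\<Union>C \<in> ?F" using CM by blast
  qed
  then obtain A where AF0: "A \<in> ?F" and Am: "\<forall>X\<in>?F. A \<subseteq> X \<longrightarrow> X = A" by blast
  have AF: "A \<subseteq> M" "transverse_set le star A" using AF0 by auto
  have Amax: "X = A" if "X \<subseteq> M" "transverse_set le star X" "A \<subseteq> X" for X
    using Am that by blast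
  have AH: "A \<subseteq> H" using AF M_def aH by auto
  have sub1: "\<alpha> \<subseteq> pi_set H le star A"
  proof
    fix x assume x: "x \<in> \<alpha>"
    then obtain m where m: "m \<in> M" "le m x" using below by blast
    have xH: "x \<in> H" and mH: "m \<in> H" using x m aH M_def by auto
    show "x \<in> pi_set H le star A"
    proof (cases "m \<in> A")
      case True then show ?thesis using m xH by (auto simp: pi_mem)
    next
      case False
      have "\<not> transverse_set le star (insert m A)"
        using Amax[of "insert m A"] False AF m by blast
      then obtain a where a: "a \<in> A" "a \<noteq> m" "nested le star a m"
        using transverse_ins[OF AF(2) AH mH] by blast
      have k: "le (star a) m" using key[of a m] a AF m by blast
      have aH': "star a \<in> H" using a AH star_in by auto
      have "le (star a) x" using trans[OF aH' mH xH k m(2)] .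
      moreover have "star a \<noteq> x" using nb[of a] a AF x M_def by auto
      ultimately show ?thesis using a xH by (auto simp: pi_mem)
    qed
  qed
  have sub2: "pi_set H le star A \<subseteq> \<alpha>"
  proof
    fix h assume h: "h \<in> pi_set H le star A"
    then have hH: "h \<in> H" by (auto simp: pi_mem)
    from h obtain a where a: "a \<in> A" "le a h \<or> (le (star a) h \<and> star a \<noteq> h)" by (auto simp: pi_mem)
    have aM: "a \<in> M" and aal: "a \<in> \<alpha>" and aH': "a \<in> H" using a AF M_def aH by auto
    from a(2) show "h \<in> \<alpha>"
    proof
      assume "le a h" then show ?thesis using up aal hH by blast
    next
      assume s: "le (star a) h \<and> star a \<noteq> h"
      show ?thesis
      proof (rule ccontr)
        assume "h \<notin> \<alpha>"
        then have sh: "star h \<in> \<alpha>" using comp hH by blast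
        have "le (star h) a" using star_le_swap[OF aH' hH] s by blast
        then have "star h = a" using aM sh unfolding M_def by blast
        then have "h = star a" using hH by (metis star_star)
        then show False using s by simp
      qed
    qed
  qed
  have eq: "\<alpha> = pi_set H le star A" using sub1 sub2 by blast
  have "maximal_transverse H le star zero A"
    unfolding maximal_transverse_def
  proof (intro conjI allI impI ballI)
    fix a assume "a \<in> A" then show "proper H star zero a" using Mpr AF by blast
  next
    show "transverse_set le star A" by (rule AF(2))
  next
    fix B assume B: "(\<forall>b\<in>B. proper H star zero b) \<and> transverse_set le star B \<and> A \<subseteq> B"
    show "B = A"
    proof (rule ccontr)
      assume "B \<noteq> A"
      then obtain h where h: "h \<in> B" "h \<notin> A" using B by blast
      have hH: "h \<in> H" using B h by (auto simp: proper_def)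
      have "h \<in> \<alpha> \<or> star h \<in> \<alpha>" using comp[OF hH] by blast
      then have "\<exists>a\<in>A. nested le star a h"
      proof
        assume "h \<in> \<alpha>"
        then obtain a where "a \<in> A" "le a h \<or> le (star a) h" using eq by (auto simp: pi_mem)
        then show ?thesis unfolding nested_def by blast
      next
        assume "star h \<in> \<alpha>"
        then obtain a where "a \<in> A" "le a (star h) \<or> le (star a) (star h)" using eq by (auto simp: pi_mem)
        then show ?thesis unfolding nested_def by blast
      qed
      then obtain a where "a \<in> A" "nested le star a h" by blast
      moreover have "a \<noteq> h" using h \<open>a \<in> A\<close> by blast
      ultimately show False using B h unfolding transverse_set_def by blast
    qed
  qed
  then show ?thesis using eq by blast
qed

end

theorem mainTheorem15:
  assumes "pocset H le star zero"
    and "discrete_pocset H le star zero"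
    and "omega_dimensional H le star"
    and "\<exists>h. proper H star zero h"
  shows "(\<forall>A. maximal_transverse H le star zero A \<longrightarrow>
            principal_ultrafilter H le star (pi_set H le star A)) \<and>
         (\<forall>\<alpha>. principal_ultrafilter H le star \<alpha> \<longrightarrow>
            (\<exists>A. maximal_transverse H le star zero A \<and> \<alpha> = pi_set H le star A))"
proof -
  interpret poc H le star zero using assms(1) by (unfold_locales)
  show ?thesis using part1[OF assms(2,3,4)] part2[OF assms(4)] by blast
qed

end
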